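(* Let $E/\mathbb{Q}$ be given by the model $y^2=x^3+Ax+B$ ($A,B\in\mathbb{Z}$) described in the context and $X=\max\{|A|^3,|B|^2\}$. Let $P,Q\in E(\mathbb{Q})$ satisfy $|x(P)|,|x(Q)|\le 2X^{1/6}$ and $x(P)=x_1/s$, $x(Q)=x_2/s$ with $x_1,x_2\in\mathbb{Z}$, $x_1\ne x_2$, and $s$ a positive integer. Then $$h(P+Q)\le 3h(s)+\tfrac12\log X+3.9.$$
   Context: The model is obtained from a global minimal Weierstrass equation of $E$ by the substitution $x\mapsto \frac{1}{36}(x-3b_2)$, $y\mapsto \frac12(\frac{y}{108}-\frac{a_1}{36}(x-3b_2)-a_3)$. $h$ is the absolute logarithmic Weil height (so $h(s)=\log s$) and $h(P)=h(x(P))$. *)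

theory Defs
  imports Complex_Main
begin

text \<open>General Weierstrass equation y^2 + a1 xy + a3 y = x^3 + a2 x^2 + a4 x + a6,
  with the standard quantities b2, b4, b6, b8, c4, c6 and discriminant.\<close>

definition wb2 :: "int \<Rightarrow> int \<Rightarrow> int" where "wb2 a1 a2 = a1^2 + 4*a2"
definition wb4 :: "int \<Rightarrow> int \<Rightarrow> int \<Rightarrow> int" where "wb4 a1 a3 a4 = 2*a4 + a1*a3"
definition wb6 :: "int \<Rightarrow> int \<Rightarrow> int" where "wb6 a3 a6 = a3^2 + 4*a6"
definition wb8 :: "int \<Rightarrow> int \<Rightarrow> int \<Rightarrow> int \<Rightarrow> int \<Rightarrow> int" where
  "wb8 a1 a2 a3 a4 a6 = a1^2*a6 + 4*a2*a6 - a1*a3*a4 + a2*a3^2 - a4^2"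

definition wc4 :: "int \<Rightarrow> int \<Rightarrow> int \<Rightarrow> int \<Rightarrow> int \<Rightarrow> int" where
  "wc4 a1 a2 a3 a4 a6 = (wb2 a1 a2)^2 - 24 * wb4 a1 a3 a4"
definition wc6 :: "int \<Rightarrow> int \<Rightarrow> int \<Rightarrow> int \<Rightarrow> int \<Rightarrow> int" where
  "wc6 a1 a2 a3 a4 a6 = 36 * wb2 a1 a2 * wb4 a1 a3 a4 - (wb2 a1 a2)^3 - 216 * wb6 a3 a6"
definition wdisc :: "int \<Rightarrow> int \<Rightarrow> int \<Rightarrow> int \<Rightarrow> int \<Rightarrow> int" where
  "wdisc a1 a2 a3 a4 a6 = 0 - (wb2 a1 a2)^2 * wb8 a1 a2 a3 a4 a6 - 8 * (wb4 a1 a3 a4)^3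
     - 27 * (wb6 a3 a6)^2 + 9 * wb2 a1 a2 * wb4 a1 a3 a4 * wb6 a3 a6"

text \<open>Coefficients after the admissible change of variables
  x = u^2 x' + r, y = u^3 y' + s u^2 x' + t (u \<noteq> 0), over Q.\<close>

definition chg_coeffs ::
  "rat \<Rightarrow> rat \<Rightarrow> rat \<Rightarrow> rat \<Rightarrow> int \<Rightarrow> int \<Rightarrow> int \<Rightarrow> int \<Rightarrow> int \<Rightarrow> rat \<times> rat \<times> rat \<times> rat \<times> rat" where
  "chg_coeffs u r s t a1 a2 a3 a4 a6 =
     ((of_int a1 + 2*s) / u,
      (of_int a2 - s * of_int a1 + 3*r - s^2) / u^2,
      (of_int a3 + r * of_int a1 + 2*t) / u^3,
      (of_int a4 - s * of_int a3 + 2*r*of_int a2 - (t + r*s) * of_int a1 + 3*r^2 - 2*s*t) / u^4,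
      (of_int a6 + r * of_int a4 + r^2 * of_int a2 + r^3 - t * of_int a3 - t^2 - r*t*of_int a1) / u^6)"


text \<open>A global minimal Weierstrass equation: integral, nonsingular, and no admissible
  change of variables over Q yields an integral model of strictly smaller |discriminant|
  (the new discriminant is disc / u^12).\<close>

definition global_minimal :: "int \<Rightarrow> int \<Rightarrow> int \<Rightarrow> int \<Rightarrow> int \<Rightarrow> bool" where
  "global_minimal a1 a2 a3 a4 a6 \<longleftrightarrow>
     wdisc a1 a2 a3 a4 a6 \<noteq> 0 \<and>
     (\<forall>u r s t. u \<noteq> 0 \<longrightarrow>
        (case chg_coeffs u r s t a1 a2 a3 a4 a6 of (b1, b2, b3, b4, b6) \<Rightarrow>
           b1 \<in> \<int> \<and> b2 \<in> \<int> \<and> b3 \<in> \<int> \<and> b4 \<in> \<int> \<and> b6 \<in> \<int>) \<longrightarrow>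
        \<bar>of_int (wdisc a1 a2 a3 a4 a6)\<bar> \<le> \<bar>of_int (wdisc a1 a2 a3 a4 a6) / u^12\<bar>)"

text \<open>Points: None is the point at infinity O, Some (x,y) an affine point.\<close>

type_synonym qpoint = "(rat \<times> rat) option"

definition on_curve :: "int \<Rightarrow> int \<Rightarrow> qpoint \<Rightarrow> bool" where
  "on_curve A B p = (case p of None \<Rightarrow> True
      | Some (x, y) \<Rightarrow> y^2 = x^3 + of_int A * x + of_int B)"

definition ec_add :: "int \<Rightarrow> qpoint \<Rightarrow> qpoint \<Rightarrow> qpoint" where
  "ec_add A p q = (case p of None \<Rightarrow> q | Some (x1, y1) \<Rightarrow>
     (case q of None \<Rightarrow> p | Some (x2, y2) \<Rightarrow>
       (if x1 = x2 \<and> y1 = - y2 then None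
        else let l = (if x1 = x2 then (3 * x1^2 + of_int A) / (2 * y1)
                      else (y2 - y1) / (x2 - x1));
                 x3 = l^2 - x1 - x2
             in Some (x3, l * (x1 - x3) - y1))))"

definition rat_height :: "rat \<Rightarrow> real" where
  "rat_height q = (case quotient_of q of (a, b) \<Rightarrow> ln (real_of_int (max \<bar>a\<bar> \<bar>b\<bar>)))"

definition pt_height :: "qpoint \<Rightarrow> real" where
  "pt_height p = (case p of None \<Rightarrow> 0 | Some (x, y) \<Rightarrow> rat_height x)"

definition xcoord :: "qpoint \<Rightarrow> rat" where
  "xcoord p = fst (the p)"

end

theory Submission
  imports Defs
begin

lemma disc_id: "1728 * wdisc a1 a2 a3 a4 a6 = (wc4 a1 a2 a3 a4 a6)^3 - (wc6 a1 a2 a3 a4 a6)^2"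
  unfolding wdisc_def wc4_def wc6_def wb2_def wb4_def wb6_def wb8_def by algebra

lemma rat_sq_int:
  fixes q :: rat and n :: int
  assumes "q^2 = of_int n"
  shows "\<exists>m::int. q = of_int m"
proof -
  obtain a b where qo: "quotient_of q = (a, b)" by (cases "quotient_of q") auto
  have bpos: "b > 0" using quotient_of_denom_pos[OF qo] .
  have cop: "coprime a b" using quotient_of_coprime[OF qo] .
  have qd: "q = of_int a / of_int b" using quotient_of_div[OF qo] .
  have "of_int a ^ 2 = (of_int n :: rat) * of_int b ^ 2"
    using assms bpos unfolding qd by (simp add: field_simps power_divide)
  then have "a^2 = n * b^2" by (metis of_int_eq_iff of_int_mult of_int_power)
  then have "b dvd a^2" by (simp add: power2_eq_square)
  moreover have "coprime b (a^2)" using cop by (simp add: coprime_commute)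
  ultimately have "is_unit b" by (metis coprime_common_divisor dvd_refl)
  then have "b = 1" using bpos by auto
  then show ?thesis using qd by auto
qed

lemma rh_bound:
  fixes q :: rat
  assumes "q * of_int D = of_int N" "D > 0"
  shows "rat_height q \<le> ln (real_of_int (max \<bar>N\<bar> D))"
proof -
  obtain a b where qo: "quotient_of q = (a, b)" by (cases "quotient_of q") auto
  have bpos: "b > 0" using quotient_of_denom_pos[OF qo] .
  have cop: "coprime a b" using quotient_of_coprime[OF qo] .
  have qd: "q = of_int a / of_int b" using quotient_of_div[OF qo] .
  have "of_int a * of_int D = (of_int N :: rat) * of_int b"
    using assms bpos unfolding qd by (simp add: field_simps)
  then have e: "a * D = N * b" by (metis of_int_eq_iff of_int_mult)
  then have "b dvd a * D" by simp
  then have "b dvd D" using cop by (metis coprime_commute coprime_dvd_mult_right_iff)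
  then obtain k where k: "D = b * k" by blast
  have kpos: "k > 0" using k bpos assms(2) by (metis zero_less_mult_pos)
  have "a * k * b = N * b" using e k by (simp add: algebra_simps)
  then have Nk: "N = a * k" using bpos by simp
  have "\<bar>a\<bar> * 1 \<le> \<bar>a\<bar> * k" by (rule mult_left_mono) (use kpos in auto)
  then have "\<bar>a\<bar> \<le> \<bar>N\<bar>" using Nk kpos by (simp add: abs_mult)
  moreover have "b \<le> D" using k kpos bpos by simp
  ultimately have le: "max \<bar>a\<bar> b \<le> max \<bar>N\<bar> D" by auto
  have "rat_height q = ln (real_of_int (max \<bar>a\<bar> b))" unfolding rat_height_def qo using bpos by simp
  also have "\<dots> \<le> ln (real_of_int (max \<bar>N\<bar> D))"
    using le bpos by (subst ln_le_cancel_iff) auto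
  finally show ?thesis .
qed

lemma exp39: "(44::real) \<le> exp 3.9"
proof -
  have "(1 + 0.39 + 0.39^2/2 :: real) \<le> exp 0.39" using exp_lower_Taylor_quadratic[of "0.39"] by simp
  then have c1: "(1 + 0.39 + 0.39^2/2 :: real)^10 \<le> exp 0.39 ^ 10" by (rule power_mono) simp
  have c2: "exp 0.39 ^ 10 = exp (10 * 0.39::real)" by (simp add: exp_of_nat_mult[symmetric])
  have c3: "exp (10 * 0.39::real) = exp 3.9" by simp
  from c1 have "(1 + 0.39 + 0.39^2/2 :: real)^10 \<le> exp 3.9" unfolding c2 c3 .
  moreover have "(44::real) \<le> (1 + 0.39 + 0.39^2/2 :: real)^10" by (simp add: eval_nat_numeral)
  ultimately show ?thesis by simp
qed

theorem lemma3p7: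
  fixes a1 a2 a3 a4 a6 A B :: int and P Q :: qpoint and x1 x2 s :: int and X :: real
  assumes "global_minimal a1 a2 a3 a4 a6"
    and "A = -27 * wc4 a1 a2 a3 a4 a6"
    and "B = -54 * wc6 a1 a2 a3 a4 a6"
    and "X = max (\<bar>real_of_int A\<bar>^3) (\<bar>real_of_int B\<bar>^2)"
    and "on_curve A B P" and "on_curve A B Q"
    and "P \<noteq> None" and "Q \<noteq> None"
    and "\<bar>real_of_rat (xcoord P)\<bar> \<le> 2 * X powr (1/6)"
    and "\<bar>real_of_rat (xcoord Q)\<bar> \<le> 2 * X powr (1/6)"
    and "s > 0"
    and "xcoord P = of_int x1 / of_int s"
    and "xcoord Q = of_int x2 / of_int s"
    and "x1 \<noteq> x2"
  shows "pt_height (ec_add A P Q) \<le> 3 * ln (real_of_int s) + ln X / 2 + 3.9"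
proof -
  obtain xP yP where P: "P = Some (xP, yP)" using assms(7) by auto
  obtain xQ yQ where Q: "Q = Some (xQ, yQ)" using assms(8) by auto
  have xP: "xP = of_int x1 / of_int s" using assms(12) P by (simp add: xcoord_def)
  have xQ: "xQ = of_int x2 / of_int s" using assms(13) Q by (simp add: xcoord_def)
  have eP: "yP^2 = xP^3 + of_int A * xP + of_int B" using assms(5) P by (simp add: on_curve_def)
  have eQ: "yQ^2 = xQ^3 + of_int A * xQ + of_int B" using assms(6) Q by (simp add: on_curve_def)
  have sne: "(of_int s :: rat) \<noteq> 0" using assms(11) by simp
  have neq: "xP \<noteq> xQ" using xP xQ sne assms(14) by (simp add: divide_cancel_right)
  define l where "l = (yQ - yP) / (xQ - xP)"
  define x3 where "x3 = l^2 - xP - xQ"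
  have add: "ec_add A P Q = Some (x3, l * (xP - x3) - yP)"
    unfolding P Q ec_add_def using neq by (simp add: l_def x3_def Let_def)
  have ht: "pt_height (ec_add A P Q) = rat_height x3" unfolding add pt_height_def by simp
  define M where "M = of_int s ^ 3 * yP * yQ"
  have sP: "of_int s ^ 3 * yP^2 = of_int (x1^3 + A * x1 * s^2 + B * s^3)"
    unfolding eP xP using sne by (simp add: field_simps power3_eq_cube power2_eq_square)
  have sQ: "of_int s ^ 3 * yQ^2 = of_int (x2^3 + A * x2 * s^2 + B * s^3)"
    unfolding eQ xQ using sne by (simp add: field_simps power3_eq_cube power2_eq_square)
  have "M^2 = (of_int s ^ 3 * yP^2) * (of_int s ^ 3 * yQ^2)" unfolding M_def by algebra
  then have "M^2 = of_int ((x1^3 + A * x1 * s^2 + B * s^3) * (x2^3 + A * x2 * s^2 + B * s^3))"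
    using sP sQ by simp
  then obtain m where m: "M = of_int m" using rat_sq_int by blast
  define N where "N = (x1*x2 + A*s^2)*(x1+x2) + 2*B*s^3 - 2*m"
  define D where "D = s * (x1 - x2)^2"
  have Dpos: "D > 0" unfolding D_def using assms(11,14) by simp
  have lx: "l * (xQ - xP) = yQ - yP" unfolding l_def using neq by simp
  have key: "x3 * (xQ - xP)^2 = (xP*xQ + of_int A)*(xP+xQ) + 2 * of_int B - 2*yP*yQ"
  proof -
    have "x3 * (xQ - xP)^2 = (l * (xQ - xP))^2 - (xP + xQ)*(xQ-xP)^2"
      unfolding x3_def by algebra
    also have "\<dots> = (yQ - yP)^2 - (xP + xQ)*(xQ-xP)^2" using lx by simp
    also have "\<dots> = yQ^2 + yP^2 - 2*yP*yQ - (xP + xQ)*(xQ-xP)^2" by algebra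
    also have "\<dots> = (xP*xQ + of_int A)*(xP+xQ) + 2 * of_int B - 2*yP*yQ"
      unfolding eP eQ by algebra
    finally show ?thesis .
  qed
  have Nrat: "(of_int N :: rat) = of_int s ^ 3 * ((xP*xQ + of_int A)*(xP+xQ) + 2 * of_int B - 2*yP*yQ)"
  proof -
    have "of_int s ^ 3 * ((xP*xQ + of_int A)*(xP+xQ) + 2 * of_int B - 2*yP*yQ)
       = (of_int s * xP * (of_int s * xQ) + of_int A * of_int s^2)*(of_int s * xP + of_int s * xQ)
         + 2 * of_int B * of_int s ^3 - 2 * M"
      unfolding M_def by algebra
    also have "\<dots> = of_int N" unfolding N_def m xP xQ using sne by simp
    finally show ?thesis by simp
  qed
  have x3D: "x3 * of_int D = of_int N"
  proof -
    have "of_int D = (of_int s :: rat) ^ 3 * (xQ - xP)^2"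
      unfolding D_def xP xQ using sne by (simp add: field_simps power2_eq_square power3_eq_cube)
    then have "x3 * of_int D = of_int s ^ 3 * (x3 * (xQ - xP)^2)" by simp
    then show ?thesis using key Nrat by simp
  qed
  have h1: "pt_height (ec_add A P Q) \<le> ln (real_of_int (max \<bar>N\<bar> D))"
    using ht rh_bound[OF x3D Dpos] by simp
  have dne: "wdisc a1 a2 a3 a4 a6 \<noteq> 0" using assms(1) unfolding global_minimal_def by simp
  have AB: "A \<noteq> 0 \<or> B \<noteq> 0"
  proof (rule ccontr)
    assume "\<not> (A \<noteq> 0 \<or> B \<noteq> 0)"
    then have "wc4 a1 a2 a3 a4 a6 = 0" "wc6 a1 a2 a3 a4 a6 = 0" using assms(2,3) by auto
    then show False using disc_id[of a1 a2 a3 a4 a6] dne by simp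
  qed
  have X1: "X \<ge> 1"
  proof (cases "A = 0")
    case True
    then have "B \<noteq> 0" using AB by simp
    then have "\<bar>real_of_int B\<bar> \<ge> 1" by linarith
    then have "\<bar>real_of_int B\<bar>^2 \<ge> 1" using one_le_power[of "\<bar>real_of_int B\<bar>" 2] by linarith
    then show ?thesis using assms(4) by linarith
  next
    case False
    then have "\<bar>real_of_int A\<bar> \<ge> 1" by linarith
    then have "\<bar>real_of_int A\<bar>^3 \<ge> 1" by (simp add: one_le_power)
    then show ?thesis using assms(4) by linarith
  qed
  define r where "r = X powr (1/6)"
  have rpos: "r > 0" unfolding r_def using X1 by simp
  have r1: "r \<ge> 1" unfolding r_def using X1 by (simp add: ge_one_powr_ge_zero)
  have r6: "r^6 = X" unfolding r_def using X1 by (simp add: powr_power)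
  have Ab: "\<bar>real_of_int A\<bar> \<le> r^2"
  proof -
    have "\<bar>real_of_int A\<bar>^3 \<le> (r^2)^3" using assms(4) r6 by (simp add: power_mult[symmetric])
    then show ?thesis using power_mono_iff[of "\<bar>real_of_int A\<bar>" "r^2" 3] rpos by simp
  qed
  have Bb: "\<bar>real_of_int B\<bar> \<le> r^3"
  proof -
    have "\<bar>real_of_int B\<bar>^2 \<le> (r^3)^2" using assms(4) r6 by (simp add: power_mult[symmetric])
    then show ?thesis using power_mono_iff[of "\<bar>real_of_int B\<bar>" "r^3" 2] rpos by simp
  qed
  define u1 where "u1 = real_of_rat xP"
  define u2 where "u2 = real_of_rat xQ"
  define v1 where "v1 = real_of_rat yP"
  define v2 where "v2 = real_of_rat yQ"
  have u1b: "\<bar>u1\<bar> \<le> 2*r" proof -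
    have "xcoord P = xP" using P by (simp add: xcoord_def)
    then show ?thesis using assms(9) unfolding u1_def r_def by simp
  qed
  have u2b: "\<bar>u2\<bar> \<le> 2*r" proof -
    have "xcoord Q = xQ" using Q by (simp add: xcoord_def)
    then show ?thesis using assms(10) unfolding u2_def r_def by simp
  qed
  have ev1: "v1^2 = u1^3 + of_int A * u1 + of_int B"
  proof -
    have "real_of_rat (yP^2) = real_of_rat (xP^3 + of_int A * xP + of_int B)" using eP by simp
    then show ?thesis unfolding u1_def v1_def by (simp add: of_rat_add of_rat_mult of_rat_power)
  qed
  have ev2: "v2^2 = u2^3 + of_int A * u2 + of_int B"
  proof -
    have "real_of_rat (yQ^2) = real_of_rat (xQ^3 + of_int A * xQ + of_int B)" using eQ by simp
    then show ?thesis unfolding u2_def v2_def by (simp add: of_rat_add of_rat_mult of_rat_power)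
  qed
  have vb: "\<And>u v. \<bar>u\<bar> \<le> 2*r \<Longrightarrow> v^2 = u^3 + of_int A * u + of_int B \<Longrightarrow> v^2 \<le> 11 * r^3"
  proof -
    fix u v :: real assume ub: "\<bar>u\<bar> \<le> 2*r" and ev: "v^2 = u^3 + of_int A * u + of_int B"
    have "\<bar>u\<bar>^3 \<le> (2*r)^3" by (rule power_mono) (use ub in auto)
    then have "\<bar>u^3\<bar> \<le> (2*r)^3" by (simp add: power_abs)
    moreover have "\<bar>of_int A * u\<bar> \<le> r^2 * (2*r)" unfolding abs_mult
      by (rule mult_mono) (use Ab ub in auto)
    ultimately have "v^2 \<le> (2*r)^3 + r^2*(2*r) + r^3" unfolding ev using Bb by linarith
    then show "v^2 \<le> 11 * r^3" by (simp add: algebra_simps power3_eq_cube power2_eq_square)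
  qed
  have "(v1*v2)^2 \<le> (11*r^3)^2"
  proof -
    have "(v1*v2)^2 = v1^2 * v2^2" by algebra
    also have "\<dots> \<le> (11*r^3) * (11*r^3)"
      by (rule mult_mono) (use vb[OF u1b ev1] vb[OF u2b ev2] rpos in auto)
    finally show ?thesis by (simp add: power2_eq_square)
  qed
  then have v12: "\<bar>v1*v2\<bar> \<le> 11*r^3"
    using abs_le_square_iff[of "v1*v2" "11*r^3"] rpos by simp
  have Nreal: "real_of_int N = real_of_int s ^ 3 * ((u1*u2 + of_int A)*(u1+u2) + 2 * of_int B - 2*v1*v2)"
  proof -
    have "real_of_int N = real_of_rat (of_int N)" by simp
    also have "\<dots> = real_of_rat (of_int s ^ 3 * ((xP*xQ + of_int A)*(xP+xQ) + 2 * of_int B - 2*yP*yQ))"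
      using Nrat by simp
    also have "\<dots> = real_of_int s ^ 3 * ((u1*u2 + of_int A)*(u1+u2) + 2 * of_int B - 2*v1*v2)"
      unfolding u1_def u2_def v1_def v2_def
      by (simp add: of_rat_add of_rat_mult of_rat_diff of_rat_power)
    finally show ?thesis .
  qed
  have inner: "\<bar>(u1*u2 + of_int A)*(u1+u2) + 2 * of_int B - 2*v1*v2\<bar> \<le> 44 * r^3"
  proof -
    have a1: "\<bar>u1*u2 + of_int A\<bar> \<le> 5*r^2"
    proof -
      have "\<bar>u1*u2\<bar> \<le> (2*r)*(2*r)" unfolding abs_mult by (rule mult_mono) (use u1b u2b in auto)
      then show ?thesis using Ab by (simp add: power2_eq_square)
    qed
    have a2: "\<bar>u1+u2\<bar> \<le> 4*r" using u1b u2b by linarith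
    have "\<bar>(u1*u2 + of_int A)*(u1+u2)\<bar> \<le> (5*r^2)*(4*r)" unfolding abs_mult
      by (rule mult_mono) (use a1 a2 in auto)
    then have "\<bar>(u1*u2 + of_int A)*(u1+u2)\<bar> \<le> 20*r^3" by (simp add: power2_eq_square power3_eq_cube)
    moreover have "\<bar>2*v1*v2\<bar> \<le> 22*r^3" using v12 by (simp add: abs_mult)
    ultimately show ?thesis using Bb by linarith
  qed
  have spos: "real_of_int s > 0" using assms(11) by simp
  have Nb: "\<bar>real_of_int N\<bar> \<le> 44 * real_of_int s ^ 3 * r^3"
    unfolding Nreal abs_mult using inner spos by (simp add: mult_left_mono)
  have Dreal: "real_of_int D = real_of_int s ^ 3 * (u1 - u2)^2"
  proof -
    have "(of_int D :: rat) = (of_int s) ^ 3 * (xP - xQ)^2"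
      unfolding D_def xP xQ using sne by (simp add: field_simps power2_eq_square power3_eq_cube)
    then have "real_of_rat (of_int D) = real_of_rat ((of_int s) ^ 3 * (xP - xQ)^2)" by simp
    then show ?thesis unfolding u1_def u2_def by (simp add: of_rat_mult of_rat_diff of_rat_power)
  qed
  have "(u1 - u2)^2 \<le> (4*r)^2"
  proof -
    have "\<bar>u1 - u2\<bar> \<le> 4*r" using u1b u2b by linarith
    then show ?thesis using abs_le_square_iff[of "u1-u2" "4*r"] rpos by linarith
  qed
  also have "\<dots> \<le> 44 * r^3" using r1 by (simp add: power2_eq_square power3_eq_cube)
  finally have Db: "real_of_int D \<le> 44 * real_of_int s ^ 3 * r^3"
    unfolding Dreal using spos by (simp add: mult_left_mono)
  have maxb: "real_of_int (max \<bar>N\<bar> D) \<le> 44 * real_of_int s ^ 3 * r^3"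
    using Nb Db by simp
  have mpos: "real_of_int (max \<bar>N\<bar> D) > 0" using Dpos by simp
  have "ln (real_of_int (max \<bar>N\<bar> D)) \<le> ln (44 * real_of_int s ^ 3 * r^3)"
    using maxb mpos by (rule ln_le_cancel_iff[THEN iffD2, rotated 2]) (use spos rpos in auto)
  also have "\<dots> = ln 44 + 3 * ln (real_of_int s) + 3 * ln r"
    using spos rpos by (simp add: ln_mult ln_realpow)
  also have "ln r = ln X / 6" unfolding r_def using X1 by (simp add: ln_powr)
  also have "ln (44::real) \<le> 3.9"
  proof -
    have "ln (44::real) \<le> ln (exp 3.9)" using exp39 by (subst ln_le_cancel_iff) auto
    then show ?thesis by simp
  qed
  finally show ?thesis using h1 by linarith
qed

end
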